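(* Assume $x_r$ is in the range of $S$. There exists an index $j$ such that $\frac{1}{y_j}|e_j^TSz_j|\ge\omega\|z_j\|$ for some global constant $\omega>0$ that only depends on $S$ and $n$.
   Context: Let $C\in\mathbb{R}^{n\times n}$ be symmetric with zero diagonal, $y\in\mathbb{R}^n$ a positive vector, and $S=C+\mathrm{diag}(y)$. Consider the Gauss-Seidel method on $\min_x x^TSx$, which cyclically minimizes over each coordinate: starting from $x_r=z_1$, for $i=1,\ldots,n$ the vector $z_{i+1}$ equals $z_i$ except in coordinate $i$, where $(z_{i+1})_i=-\frac{1}{y_i}\sum_{j}c_{ij}(z_i)_j$; then $x_{r+1}=z_{n+1}$. Here $e_j$ is the $j$-th standard basis vector and $\|\cdot\|$ the Euclidean norm. *)

theory Defs
  imports Main "HOL-Analysis.Analysis"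
begin

(* Vectors in R^n are functions nat => real, only entries at indices < n matter;
   n x n matrices are functions nat => nat => real, only entries at indices < n matter.
   Indices are 0-based: index i here corresponds to i+1 in the paper. *)

definition Smat :: "(nat \<Rightarrow> nat \<Rightarrow> real) \<Rightarrow> (nat \<Rightarrow> real) \<Rightarrow> nat \<Rightarrow> nat \<Rightarrow> real" where
  "Smat C y i j = C i j + (if i = j then y i else 0)"

definition mat_vec :: "nat \<Rightarrow> (nat \<Rightarrow> nat \<Rightarrow> real) \<Rightarrow> (nat \<Rightarrow> real) \<Rightarrow> nat \<Rightarrow> real" where
  "mat_vec n A v i = (\<Sum>k<n. A i k * v k)"

definition in_range :: "nat \<Rightarrow> (nat \<Rightarrow> nat \<Rightarrow> real) \<Rightarrow> (nat \<Rightarrow> real) \<Rightarrow> bool" where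
  "in_range n A x \<longleftrightarrow> (\<exists>w. \<forall>i<n. x i = mat_vec n A w i)"

definition vnorm :: "nat \<Rightarrow> (nat \<Rightarrow> real) \<Rightarrow> real" where
  "vnorm n v = sqrt (\<Sum>i<n. (v i)^2)"

(* Gauss-Seidel inner iterates: gs_z n C y x 0 = x_r (paper z_1),
   gs_z n C y x (Suc i) = z_i with coordinate i replaced by -(1/y_i) sum_j c_ij (z_i)_j
   (paper z_{i+2} from z_{i+1}). *)
fun gs_z :: "nat \<Rightarrow> (nat \<Rightarrow> nat \<Rightarrow> real) \<Rightarrow> (nat \<Rightarrow> real) \<Rightarrow> (nat \<Rightarrow> real) \<Rightarrow> nat \<Rightarrow> (nat \<Rightarrow> real)" where
  "gs_z n C y x 0 = x"
| "gs_z n C y x (Suc i) =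
     (gs_z n C y x i)(i := - (1 / y i) * (\<Sum>j<n. C i j * gs_z n C y x i j))"

end

theory Submission
  imports Defs
begin

lemma gs_z_cont:
  "\<forall>i. continuous_on A (\<lambda>x. gs_z n C y x j i)"
proof (induction j)
  case 0
  then show ?case
    by (auto intro: continuous_on_subset[OF continuous_on_product_coordinates])
next
  case (Suc j)
  show ?case
  proof
    fix i
    have s: "continuous_on A (\<lambda>x. - (1 / y j) * (\<Sum>k<n. C j k * gs_z n C y x j k))"
      using Suc by (intro continuous_intros) auto
    show "continuous_on A (\<lambda>x. gs_z n C y x (Suc j) i)"
      using Suc s by (cases "i = j") auto
  qed
qed

lemma gs_z_scale:
  "\<forall>i<n. gs_z n C y (\<lambda>i. if i < n then c * x i else 0) j i = c * gs_z n C y x j i"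
proof (induction j)
  case 0
  then show ?case by simp
next
  case (Suc j)
  show ?case
  proof (intro allI impI)
    fix i assume i: "i < n"
    show "gs_z n C y (\<lambda>i. if i < n then c * x i else 0) (Suc j) i = c * gs_z n C y x (Suc j) i"
    proof (cases "i = j")
      case True
      have "(\<Sum>k<n. C j k * gs_z n C y (\<lambda>i. if i < n then c * x i else 0) j k)
            = (\<Sum>k<n. c * (C j k * gs_z n C y x j k))"
        using Suc by (intro sum.cong) auto
      then show ?thesis using True by (simp add: sum_distrib_left[symmetric])
    next
      case False
      then show ?thesis using Suc i by simp
    qed
  qed
qed

lemma gs_z_fix:
  assumes "\<forall>j<n. mat_vec n (Smat C y) (gs_z n C y x j) j = 0"
    and "\<forall>i<n. y i > 0"
  shows "j \<le> n \<Longrightarrow> gs_z n C y x j = x"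
proof (induction j)
  case 0
  then show ?case by simp
next
  case (Suc j)
  then have jn: "j < n" and IH: "gs_z n C y x j = x" by auto
  have u: "mat_vec n (Smat C y) x j = 0" using assms(1) jn IH by metis
  have "mat_vec n (Smat C y) x j = (\<Sum>k<n. C j k * x k) + (\<Sum>k<n. (if j = k then y j else 0) * x k)"
    unfolding mat_vec_def Smat_def by (simp add: distrib_right sum.distrib)
  also have "(\<Sum>k<n. (if j = k then y j else 0) * x k) = y j * x j"
    using jn by (subst sum.cong[OF refl, of _ _ "\<lambda>k. if j = k then y j * x k else 0"]) auto
  finally have "(\<Sum>k<n. C j k * x k) = - y j * x j" using u by simp
  moreover have "y j > 0" using assms(2) jn by auto
  ultimately have "- (1 / y j) * (\<Sum>k<n. C j k * x k) = x j" by simp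
  then show ?case using IH by simp
qed

lemma range_orth:
  assumes sym: "\<forall>i<n. \<forall>j<n. C i j = C j i"
    and r: "in_range n (Smat C y) x"
    and v: "\<forall>i<n. mat_vec n (Smat C y) v i = 0"
  shows "(\<Sum>i<n. x i * v i) = 0"
proof -
  obtain w where w: "\<forall>i<n. x i = mat_vec n (Smat C y) w i" using r unfolding in_range_def by auto
  have symS: "\<forall>i<n. \<forall>k<n. Smat C y i k = Smat C y k i" using sym unfolding Smat_def by auto
  have "(\<Sum>i<n. x i * v i) = (\<Sum>i<n. \<Sum>k<n. Smat C y i k * w k * v i)"
    using w by (simp add: mat_vec_def sum_distrib_right)
  also have "\<dots> = (\<Sum>k<n. \<Sum>i<n. Smat C y i k * w k * v i)" by (rule sum.swap)
  also have "\<dots> = (\<Sum>k<n. w k * mat_vec n (Smat C y) v k)"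
    unfolding mat_vec_def sum_distrib_left
    by (intro sum.cong refl) (simp add: symS mult_ac)
  also have "\<dots> = 0" using v by simp
  finally show ?thesis .
qed

lemma scale_vnorm:
  assumes "\<forall>i<n. a i = c * b i" "c \<ge> 0"
  shows "vnorm n a = c * vnorm n b"
proof -
  have "(\<Sum>i<n. (a i)^2) = c^2 * (\<Sum>i<n. (b i)^2)"
    using assms(1) by (simp add: sum_distrib_left power_mult_distrib)
  then show ?thesis unfolding vnorm_def using assms(2) by (simp add: real_sqrt_mult)
qed

lemma scale_mat_vec:
  assumes "\<forall>i<n. a i = c * b i"
  shows "mat_vec n A a j = c * mat_vec n A b j"
  unfolding mat_vec_def sum_distrib_left using assms by (intro sum.cong) auto

theorem lemma12:
  fixes n :: nat and C :: "nat \<Rightarrow> nat \<Rightarrow> real" and y :: "nat \<Rightarrow> real"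
  assumes "n \<ge> 1"
    and "\<forall>i<n. \<forall>j<n. C i j = C j i"
    and "\<forall>i<n. C i i = 0"
    and "\<forall>i<n. y i > 0"
  shows "\<exists>\<omega>>0. \<forall>x. in_range n (Smat C y) x \<longrightarrow>
           (\<exists>j<n. (1 / y j) * \<bar>mat_vec n (Smat C y) (gs_z n C y x j) j\<bar>
                    \<ge> \<omega> * vnorm n (gs_z n C y x j))"
proof -
  define S where "S = Smat C y"
  define u where "u x j = mat_vec n S (gs_z n C y x j) j" for x j
  define K where "K = {v. \<forall>i<n. mat_vec n S v i = 0}"
  define Box :: "(nat \<Rightarrow> real) set" where "Box = PiE UNIV (\<lambda>i. if i < n then {-1..1} else {0})"
  define B where "B = Box \<inter> {x. (\<Sum>i<n. (x i)^2) = 1} \<inter> (\<Inter>v\<in>K. {x. (\<Sum>i<n. x i * v i) = 0})"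
  define F where "F x = (\<Sum>j<n. \<bar>u x j\<bar> / y j)" for x
  define G where "G x = (\<Sum>j<n. vnorm n (gs_z n C y x j))" for x
  have gc: "continuous_on A (\<lambda>x. gs_z n C y x j i)" for A j i
    using gs_z_cont by blast
  have cpc: "continuous_on A (\<lambda>x::nat\<Rightarrow>real. x i)" for A i
    by (rule continuous_on_subset[OF continuous_on_product_coordinates]) auto
  have contF: "continuous_on A F" for A
    unfolding F_def u_def mat_vec_def by (intro continuous_intros gc) (use assms(4) in auto)
  have contG: "continuous_on A G" for A
    unfolding G_def vnorm_def by (intro continuous_intros gc)
  have "compactin (product_topology (\<lambda>i. euclidean) UNIV) Box"
    unfolding Box_def compactin_PiE by (auto simp: compactin_euclidean_iff)
  then have cBox: "compact Box"
    by (simp add: euclidean_product_topology compactin_euclidean_iff)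
  have cl1: "closed {x::nat\<Rightarrow>real. (\<Sum>i<n. (x i)^2) = 1}"
    by (intro closed_Collect_eq continuous_intros cpc)
  have cl2: "closed (\<Inter>v\<in>K. {x::nat\<Rightarrow>real. (\<Sum>i<n. x i * v i) = 0})"
    by (intro closed_INT ballI closed_Collect_eq continuous_intros cpc)
  have cB: "compact B" unfolding B_def
    by (intro compact_Int_closed cBox cl1 cl2)
  have Fpos: "F x > 0" if xB: "x \<in> B" for x
  proof (rule ccontr)
    assume nF: "\<not> F x > 0"
    have nn: "\<forall>j\<in>{..<n}. 0 \<le> \<bar>u x j\<bar> / y j" using assms(4) by auto
    have "F x \<ge> 0" unfolding F_def using nn by (intro sum_nonneg) auto
    with nF have "F x = 0" by linarith
    then have z: "\<forall>j\<in>{..<n}. \<bar>u x j\<bar> / y j = 0"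
      unfolding F_def using sum_nonneg_eq_0_iff[of "{..<n}" "\<lambda>j. \<bar>u x j\<bar> / y j"] nn by blast
    have u0: "\<forall>j<n. mat_vec n (Smat C y) (gs_z n C y x j) j = 0"
    proof (intro allI impI)
      fix j assume "j < n"
      then have "\<bar>u x j\<bar> / y j = 0" "y j > 0" using z assms(4) by auto
      then show "mat_vec n (Smat C y) (gs_z n C y x j) j = 0"
        unfolding u_def S_def by simp
    qed
    have fx: "gs_z n C y x j = x" if "j \<le> n" for j
      using gs_z_fix[OF u0 assms(4) that] .
    have "x \<in> K" unfolding K_def
    proof (intro CollectI allI impI)
      fix i assume i: "i < n"
      then have "gs_z n C y x i = x" using fx by simp
      then show "mat_vec n S x i = 0" using u0 i unfolding S_def by metis
    qed
    then have "(\<Sum>i<n. x i * x i) = 0" using xB unfolding B_def by blast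
    moreover have "(\<Sum>i<n. (x i)^2) = 1" using xB unfolding B_def by blast
    ultimately show False by (simp add: power2_eq_square)
  qed
  obtain m where m: "m > 0" "\<forall>x\<in>B. F x \<ge> m"
  proof (cases "B = {}")
    case True then show ?thesis using that[of 1] by auto
  next
    case False
    then obtain x0 where "x0 \<in> B" "\<forall>x\<in>B. F x0 \<le> F x"
      using continuous_attains_inf[OF cB False contF] by blast
    then show ?thesis using that[of "F x0"] Fpos by auto
  qed
  obtain M where M: "M > 0" "\<forall>x\<in>B. G x \<le> M"
  proof (cases "B = {}")
    case True then show ?thesis using that[of 1] by auto
  next
    case False
    then obtain x0 where x0: "x0 \<in> B" "\<forall>x\<in>B. G x \<le> G x0"
      using continuous_attains_sup[OF cB False contG] by blast
    have "vnorm n (gs_z n C y x0 0) = 1" using x0(1) unfolding B_def vnorm_def by auto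
    moreover have "vnorm n (gs_z n C y x0 0) \<le> G x0"
      unfolding G_def using assms(1)
      by (intro member_le_sum) (auto simp: vnorm_def sum_nonneg)
    ultimately show ?thesis using that[of "G x0"] x0 by auto
  qed
  define \<omega> where "\<omega> = m / (real n * M)"
  have npos: "real n > 0" using assms(1) by auto
  have wpos: "\<omega> > 0" unfolding \<omega>_def using m M npos by auto
  show ?thesis
  proof (intro exI[of _ \<omega>] conjI wpos allI impI)
    fix x assume xr: "in_range n (Smat C y) x"
    define r where "r = vnorm n x"
    show "\<exists>j<n. (1 / y j) * \<bar>mat_vec n (Smat C y) (gs_z n C y x j) j\<bar>
                    \<ge> \<omega> * vnorm n (gs_z n C y x j)"
    proof (cases "r = 0")
      case True
      then show ?thesis using assms(1) assms(4) r_def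
        by (intro exI[of _ 0]) auto
    next
      case False
      have sq: "r^2 = (\<Sum>i<n. (x i)^2)" unfolding r_def vnorm_def
        by (simp add: sum_nonneg)
      have "r \<ge> 0" unfolding r_def vnorm_def by (simp add: sum_nonneg)
      then have rpos: "r > 0" using False by linarith
      define x' where "x' = (\<lambda>i. if i < n then (1/r) * x i else 0)"
      have x'B: "x' \<in> B"
      proof -
        have "x' \<in> Box"
        proof -
          have "\<bar>x i\<bar> \<le> r" if "i < n" for i
          proof -
            have "(x i)^2 \<le> (\<Sum>i<n. (x i)^2)"
              using that by (intro member_le_sum) auto
            then have "\<bar>x i\<bar>^2 \<le> r^2" using sq by simp
            then show ?thesis using rpos by (metis abs_le_square_iff abs_of_pos power2_abs)
          qed
          then show ?thesis unfolding Box_def x'_def using rpos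
            by (auto simp: abs_le_iff field_simps) (smt (verit))
        qed
        moreover have "(\<Sum>i<n. (x' i)^2) = 1"
        proof -
          have "(\<Sum>i<n. (x' i)^2) = (\<Sum>i<n. (x i)^2) / r^2"
            unfolding x'_def by (simp add: sum_divide_distrib power_divide)
          then show ?thesis using sq rpos by (metis divide_self power_not_zero less_irrefl)
        qed
        moreover have "(\<Sum>i<n. x' i * v i) = 0" if "v \<in> K" for v
        proof -
          have "(\<Sum>i<n. x i * v i) = 0"
            using range_orth[OF assms(2) xr] that unfolding K_def S_def by auto
          then show ?thesis unfolding x'_def
            by (simp add: sum_divide_distrib[symmetric])
        qed
        ultimately show ?thesis unfolding B_def by auto
      qed
      have sc: "\<forall>i<n. gs_z n C y x' j i = (1/r) * gs_z n C y x j i" for j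
        unfolding x'_def by (rule gs_z_scale)
      have "F x' \<ge> m" using m x'B by auto
      obtain j where j: "j < n" "\<bar>u x' j\<bar> / y j \<ge> m / real n"
      proof (rule ccontr)
        assume "\<not> thesis"
        then have "\<forall>j<n. \<bar>u x' j\<bar> / y j < m / real n" using that by force
        then have "F x' < (\<Sum>j<n. m / real n)" unfolding F_def using assms(1)
          by (intro sum_strict_mono) (auto simp: lessThan_empty_iff)
        also have "\<dots> = m" using npos by simp
        finally show False using \<open>F x' \<ge> m\<close> by simp
      qed
      have Gb: "vnorm n (gs_z n C y x' j) \<le> M"
      proof -
        have "vnorm n (gs_z n C y x' j) \<le> G x'"
          unfolding G_def using j(1) by (intro member_le_sum) (auto simp: vnorm_def sum_nonneg)
        then show ?thesis using M x'B by auto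
      qed
      have u': "u x' j = (1/r) * u x j" unfolding u_def
        by (rule scale_mat_vec[OF sc])
      have v': "vnorm n (gs_z n C y x' j) = (1/r) * vnorm n (gs_z n C y x j)"
        by (rule scale_vnorm[OF sc]) (use rpos in auto)
      have yj: "y j > 0" using assms(4) j(1) by auto
      have "\<omega> * vnorm n (gs_z n C y x j) = \<omega> * r * vnorm n (gs_z n C y x' j)"
        using v' rpos by simp
      also have "\<dots> \<le> \<omega> * r * M" using Gb wpos rpos by simp
      also have "\<dots> = r * (m / real n)" unfolding \<omega>_def using M npos by simp
      also have "\<dots> \<le> r * (\<bar>u x' j\<bar> / y j)" using j(2) rpos by (intro mult_left_mono) auto
      also have "\<dots> = (1 / y j) * \<bar>u x j\<bar>" using u' rpos yj by (simp add: abs_mult)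
      finally show ?thesis using j(1) unfolding u_def S_def by auto
    qed
  qed
qed

end
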